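(* Let $\mathcal{F}=\{f_1,\dots,f_M\}$ be a frame of $\mathbb{R}^N$ partitioned into $K$ disjoint pools $\mathcal{F}_k=\{f_j\}_{j\in I_k}$, $k=1,\dots,K$, with $I_k\cap I_{k'}=\emptyset$ for $k\neq k'$, $\bigcup_k I_k=\{1,\dots,M\}$ and $|I_k|=d$ for all $k$. Let $P_2(x)=\big(\|\mathcal{F}_k^T x\|_2\big)_{k=1}^K$ be the $\ell_2$ pooling operator. Then for all $x,x'\in\mathbb{R}^N$, $$A_2\, d(x,x')\le \|P_2(x)-P_2(x')\|_2\le B_2\, d(x,x'),$$ where $d(x,x')=\min(\|x-x'\|,\|x+x'\|)$, $$A_2=\min_{\mathcal{F}'\in\mathcal{Q}_2}\ \min_{\Omega\subset\{1,\dots,M\}}\sqrt{\lambda_-^2(\mathcal{F}'_\Omega)+\lambda_-^2(\mathcal{F}'_{\Omega^c})},\qquad B_2=\lambda_+(\mathcal{F}),$$ and $\mathcal{Q}_2$ is the family of frames $\mathcal{F}'=(U_k\mathcal{F}_k)_{k\le K}$ obtained by choosing, for each $k$, an orthogonal matrix $U_k\in\mathbb{R}^{d\times d}$ ($U_k^TU_k=\mathrm{Id}$) and replacing the $d$ vectors of pool $k$ by the $d$ vectors obtained by applying $U_k$ to them (i.e. the columns of $\mathcal{F}_kU_k^T$, where $\mathcal{F}_k$ is viewed as the $N\times d$ matrix with columns $f_j$, $j\in I_k$), so that each pool is replaced by another frame of the same subspace with the same frame operator.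
   Context: For a finite family of vectors $G=\{g_i\}$ in $\mathbb{R}^N$, $\lambda_-(G)=\inf_{\|x\|=1}\big(\sum_i\langle x,g_i\rangle^2\big)^{1/2}$ and $\lambda_+(G)=\sup_{\|x\|=1}\big(\sum_i\langle x,g_i\rangle^2\big)^{1/2}$ denote its lower and upper frame bounds (in square-root form), with $\lambda_-(\emptyset)=0$. For $\Omega\subset\{1,\dots,M\}$, $\mathcal{F}'_\Omega$ is the subfamily of vectors of $\mathcal{F}'$ indexed by $\Omega$, and $\Omega^c$ is the complement of $\Omega$ in $\{1,\dots,M\}$. *)

theory Defs
  imports "HOL-Analysis.Analysis"
begin

text \<open>Frame bounds (square-root form) of the subfamily of g indexed by S.
  For S empty the sum is 0, so the lower bound is 0.\<close>
definition lam_minus :: "('i \<Rightarrow> real^'n::finite) \<Rightarrow> 'i set \<Rightarrow> real" where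
  "lam_minus g S = (INF x\<in>{x::real^'n. norm x = 1}. sqrt (\<Sum>i\<in>S. (x \<bullet> g i)^2))"

definition lam_plus :: "('i \<Rightarrow> real^'n::finite) \<Rightarrow> 'i set \<Rightarrow> real" where
  "lam_plus g S = (SUP x\<in>{x::real^'n. norm x = 1}. sqrt (\<Sum>i\<in>S. (x \<bullet> g i)^2))"

text \<open>A frame with K pools of size d: vector j of pool k is f k j.\<close>
definition is_frame :: "('k::finite \<Rightarrow> 'd::finite \<Rightarrow> real^'n::finite) \<Rightarrow> bool" where
  "is_frame f \<longleftrightarrow> span (range (case_prod f)) = UNIV"

definition pool2 :: "('k::finite \<Rightarrow> 'd::finite \<Rightarrow> real^'n::finite) \<Rightarrow> real^'n \<Rightarrow> real^'k" where
  "pool2 f x = (\<chi> k. sqrt (\<Sum>j\<in>UNIV. (f k j \<bullet> x)^2))"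

definition Q2 :: "('k::finite \<Rightarrow> 'd::finite \<Rightarrow> real^'n::finite) \<Rightarrow> ('k \<Rightarrow> 'd \<Rightarrow> real^'n) set" where
  "Q2 f = {(\<lambda>k i. \<Sum>j\<in>UNIV. (U k $ i $ j) *\<^sub>R f k j) | U :: 'k \<Rightarrow> real^'d^'d.
             \<forall>k. orthogonal_matrix (U k)}"

definition A2 :: "('k::finite \<Rightarrow> 'd::finite \<Rightarrow> real^'n::finite) \<Rightarrow> real" where
  "A2 f = (INF F'\<in>Q2 f. INF \<Omega>\<in>(UNIV :: ('k \<times> 'd) set set).
     sqrt ((lam_minus (case_prod F') \<Omega>)^2 + (lam_minus (case_prod F') (- \<Omega>))^2))"

definition B2 :: "('k::finite \<Rightarrow> 'd::finite \<Rightarrow> real^'n::finite) \<Rightarrow> real" where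
  "B2 f = lam_plus (case_prod f) UNIV"

definition dpm :: "real^'n::finite \<Rightarrow> real^'n \<Rightarrow> real" where
  "dpm x x' = min (norm (x - x')) (norm (x + x'))"

end

theory Submission
  imports Defs
begin

lemma sqnorm: "norm (v::real^'d) ^ 2 = (\<Sum>i\<in>UNIV. (v$i)^2)"
  unfolding power2_norm_eq_inner inner_vec_def by (simp add: power2_eq_square)

lemma orth_norm:
  fixes T :: "real^'d^'d"
  assumes "orthogonal_matrix T"
  shows "norm (T *v v) = norm v"
proof -
  have "orthogonal_transformation ((*v) T)"
    using assms orthogonal_transformation_matrix[of "(*v) T"]
    by (simp add: matrix_of_matrix_vector_mul)
  then show ?thesis by (simp add: orthogonal_transformation)
qed

lemma exists_row:
  fixes u :: "real^'d" and k :: 'd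
  assumes "norm u = 1"
  shows "\<exists>U. orthogonal_matrix U \<and> (\<forall>v. (U *v v)$k = u \<bullet> v) \<and> (\<forall>v. norm (U *v v) = norm v)"
proof -
  obtain A where A: "orthogonal_matrix A" "A *v (axis k 1) = u"
    using orthogonal_matrix_exists_basis assms by metis
  have o: "orthogonal_matrix (transpose A)" using A by simp
  have row: "(transpose A *v v)$k = u \<bullet> v" for v
  proof -
    have "u $ j = A $ j $ k" for j using A(2)
      by (simp add: matrix_vector_mult_def axis_def vec_eq_iff if_distrib cong: if_cong) 
    then show ?thesis
      by (simp add: matrix_vector_mult_def transpose_def inner_vec_def mult.commute)
  qed
  with o orth_norm[OF o] show ?thesis by blast
qed

lemma pool_step:
  fixes a b :: "real^'d::finite"
  shows "\<exists>U \<Omega>. orthogonal_matrix U \<and>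
     (\<Sum>i\<in>\<Omega>. ((U *v (a-b))$i)^2) + (\<Sum>i\<in>-\<Omega>. ((U *v (a+b))$i)^2) \<le> (norm a - norm b)^2"
proof (cases "norm a * norm b + a \<bullet> b \<le> 0")
  case True
  have "a \<bullet> b \<ge> - (norm a * norm b)" using norm_cauchy_schwarz[of "-a" b] by simp
  hence eq: "a \<bullet> b = -(norm a*norm b)" using True by linarith
  have "(\<Sum>i\<in>-{}. ((mat 1 *v (a+b))$i)^2) = norm (a+b)^2" by (simp add: sqnorm)
  also have "\<dots> = (norm a - norm b)^2"
  proof -
    have "norm (a+b)^2 = a \<bullet> a + b \<bullet> b + 2 * (a \<bullet> b)"
      by (simp add: power2_norm_eq_inner inner_add_left inner_add_right inner_commute)
    also have "\<dots> = norm a ^2 + norm b^2 - 2 * (norm a * norm b)"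
      using eq by (simp add: power2_norm_eq_inner)
    finally show ?thesis by (simp add: power2_diff)
  qed
  finally show ?thesis
    by (intro exI[of _ "mat 1"] exI[of _ "{}"]) (auto simp: orthogonal_matrix_id)
next
  case False
  define r where "r = norm a"
  define s where "s = norm b"
  have pos: "r * s + a \<bullet> b > 0" using False by (simp add: r_def s_def)
  have "a \<noteq> 0" "b \<noteq> 0" using pos by (auto simp: r_def s_def)
  hence rs: "r > 0" "s > 0" by (auto simp: r_def s_def)
  define w where "w = s *\<^sub>R a + r *\<^sub>R b"
  have aa: "a \<bullet> a = r^2" "b \<bullet> b = s^2" by (simp_all add: r_def s_def power2_norm_eq_inner)
  have wa: "w \<bullet> a = r * (r * s + (a \<bullet> b))" and wb: "w \<bullet> b = s * (r * s + (a \<bullet> b))"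
    using aa by (auto simp: w_def inner_add_left inner_commute algebra_simps power2_eq_square)
  have ww: "w \<bullet> w = 2 * r * s * (r * s + (a \<bullet> b))"
    using aa by (auto simp: w_def inner_add_left inner_add_right inner_commute algebra_simps power2_eq_square)
  have wwpos: "w \<bullet> w > 0" using ww pos rs by simp
  have nw: "norm w = sqrt (w \<bullet> w)" by (simp add: norm_eq_sqrt_inner)
  define u where "u = w /\<^sub>R norm w"
  have nu: "norm u = 1" using wwpos by (simp add: u_def)
  have prod: "(u \<bullet> a) * (u \<bullet> b) = (r * s + (a \<bullet> b)) / 2"
  proof -
    have "(u \<bullet> a) * (u \<bullet> b) = (w \<bullet> a) * (w \<bullet> b) / (w \<bullet> w)"
    proof -
      have "sqrt (w \<bullet> w) * sqrt (w \<bullet> w) = w \<bullet> w" using wwpos by simp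
      then show ?thesis using wwpos by (simp add: u_def nw field_simps)
    qed
    also have "\<dots> = (r * s + (a \<bullet> b)) / 2"
    proof -
      have gen: "(r*c)*(s*c)/(2 * r * s * c) = c/2" if "c > 0" for c
        using rs that by (simp add: field_simps)
      show ?thesis unfolding wa wb ww by (rule gen[OF pos])
    qed
    finally show ?thesis .
  qed
  obtain k :: 'd where True by blast
  obtain U where U: "orthogonal_matrix U" "\<And>v. (U *v v)$k = u \<bullet> v" "\<And>v. norm (U *v v) = norm v"
    using exists_row[OF nu, of k] by blast
  have split: "(\<Sum>i\<in>-{k}. ((U *v (a+b))$i)^2) = norm (a+b)^2 - (u \<bullet> (a+b))^2"
  proof -
    have "norm (a+b)^2 = norm (U *v (a+b))^2" using U(3) by simp
    also have "\<dots> = ((U *v (a+b))$k)^2 + (\<Sum>i\<in>UNIV-{k}. ((U *v (a+b))$i)^2)"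
      unfolding sqnorm by (simp add: sum.remove)
    finally show ?thesis using U(2) by (simp add: Compl_eq_Diff_UNIV)
  qed
  have "(\<Sum>i\<in>{k}. ((U *v (a-b))$i)^2) + (\<Sum>i\<in>-{k}. ((U *v (a+b))$i)^2)
      = (u \<bullet> a - u \<bullet> b)^2 + (a+b)\<bullet>(a+b) - (u \<bullet> a + u \<bullet> b)^2"
    using U(2) split by (simp add: inner_diff_right inner_add_right power2_norm_eq_inner)
  also have "\<dots> = r^2 + s^2 + 2 * (a \<bullet> b) - 4 * ((u \<bullet> a) * (u \<bullet> b))"
    using aa by (simp add: inner_add_left inner_add_right inner_commute power2_eq_square algebra_simps)
  also have "\<dots> = (norm a - norm b)^2" unfolding prod
    by (simp add: r_def s_def power2_eq_square algebra_simps)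
  finally show ?thesis using U(1) by (intro exI[of _ U] exI[of _ "{k}"]) simp
qed

lemma unit_ex: "\<exists>u::real^'n::finite. norm u = 1"
  by (rule exI[of _ "axis undefined 1"]) simp

lemma sq_div: "(\<Sum>i\<in>S. ((z /\<^sub>R norm z) \<bullet> g i)^2) = (\<Sum>i\<in>S. (z \<bullet> g i)^2) / (norm z)^2"
proof -
  have "((z /\<^sub>R norm z) \<bullet> g i)^2 = (z \<bullet> g i)^2 / (norm z)^2" for i
    by (simp add: power_mult_distrib power_inverse divide_inverse_commute)
  then show ?thesis by (simp add: sum_divide_distrib)
qed

lemma lam_minus_nonneg: "lam_minus g S \<ge> 0"
  unfolding lam_minus_def using unit_ex by (intro cINF_greatest) (auto intro: sum_nonneg)

lemma lam_minus_bound: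
  fixes g :: "'i \<Rightarrow> real^'n::finite"
  shows "(lam_minus g S)^2 * norm z^2 \<le> (\<Sum>i\<in>S. (z \<bullet> g i)^2)"
proof (cases "z = 0")
  case True then show ?thesis by (simp add: sum_nonneg)
next
  case False
  define u where "u = z /\<^sub>R norm z"
  have nu: "norm u = 1" using False by (simp add: u_def)
  have "lam_minus g S \<le> sqrt (\<Sum>i\<in>S. (u \<bullet> g i)^2)"
    unfolding lam_minus_def
    by (rule cINF_lower) (use nu in \<open>auto intro!: bdd_belowI[of _ 0] sum_nonneg\<close>)
  hence "(lam_minus g S)^2 \<le> (\<Sum>i\<in>S. (u \<bullet> g i)^2)"
  proof -
    assume h: "lam_minus g S \<le> sqrt (\<Sum>i\<in>S. (u \<bullet> g i)^2)"
    have "(lam_minus g S)^2 \<le> (sqrt (\<Sum>i\<in>S. (u \<bullet> g i)^2))^2"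
      by (rule power_mono[OF h lam_minus_nonneg])
    then show ?thesis by (simp add: sum_nonneg)
  qed
  also have "\<dots> = (\<Sum>i\<in>S. (z \<bullet> g i)^2) / (norm z)^2" unfolding u_def by (rule sq_div)
  finally show ?thesis using False by (simp add: field_simps)
qed

lemma lam_plus_bdd:
  fixes g :: "'i \<Rightarrow> real^'n::finite"
  shows "bdd_above ((\<lambda>x. sqrt (\<Sum>i\<in>S. (x \<bullet> g i)^2)) ` {x. norm x = 1})"
proof (rule bdd_aboveI[of _ "sqrt (\<Sum>i\<in>S. (norm (g i))^2)"])
  fix y assume "y \<in> (\<lambda>x. sqrt (\<Sum>i\<in>S. (x \<bullet> g i)^2)) ` {x. norm x = 1}"
  then obtain x :: "real^'n" where "norm x = 1" and y: "y = sqrt (\<Sum>i\<in>S. (x \<bullet> g i)^2)" by auto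
  have "(x \<bullet> g i)^2 \<le> (norm (g i))^2" for i
  proof -
    have "\<bar>x \<bullet> g i\<bar> \<le> norm (g i)" using Cauchy_Schwarz_ineq2[of x "g i"] \<open>norm x = 1\<close> by simp
    then have "\<bar>x \<bullet> g i\<bar>^2 \<le> (norm (g i))^2" by (rule power_mono) simp
    then show ?thesis by simp
  qed
  then show "y \<le> sqrt (\<Sum>i\<in>S. (norm (g i))^2)"
    unfolding y by (simp add: sum_mono)
qed

lemma lam_plus_nonneg:
  fixes g :: "'i \<Rightarrow> real^'n::finite"
  shows "lam_plus g S \<ge> 0"
proof -
  obtain u :: "real^'n" where u: "norm u = 1" using unit_ex by blast
  have "sqrt (\<Sum>i\<in>S. (u \<bullet> g i)^2) \<le> lam_plus g S"
    unfolding lam_plus_def by (rule cSUP_upper) (use u lam_plus_bdd in auto)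
  moreover have "0 \<le> sqrt (\<Sum>i\<in>S. (u \<bullet> g i)^2)" by (simp add: sum_nonneg)
  ultimately show ?thesis by linarith
qed

lemma lam_plus_bound:
  fixes g :: "'i \<Rightarrow> real^'n::finite"
  shows "(\<Sum>i\<in>S. (z \<bullet> g i)^2) \<le> (lam_plus g S)^2 * norm z^2"
proof (cases "z = 0")
  case True then show ?thesis by simp
next
  case False
  define u where "u = z /\<^sub>R norm z"
  have nu: "norm u = 1" using False by (simp add: u_def)
  have "sqrt (\<Sum>i\<in>S. (u \<bullet> g i)^2) \<le> lam_plus g S"
    unfolding lam_plus_def by (rule cSUP_upper) (use nu lam_plus_bdd in auto)
  hence "(\<Sum>i\<in>S. (u \<bullet> g i)^2) \<le> (lam_plus g S)^2"
  proof -
    assume h: "sqrt (\<Sum>i\<in>S. (u \<bullet> g i)^2) \<le> lam_plus g S"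
    have "(sqrt (\<Sum>i\<in>S. (u \<bullet> g i)^2))^2 \<le> (lam_plus g S)^2"
      by (rule power_mono[OF h]) (auto intro: sum_nonneg)
    then show ?thesis using sum_nonneg[of S "\<lambda>i. (u \<bullet> g i)^2"] by simp
  qed
  moreover have "(\<Sum>i\<in>S. (u \<bullet> g i)^2) = (\<Sum>i\<in>S. (z \<bullet> g i)^2) / (norm z)^2" unfolding u_def by (rule sq_div)
  ultimately show ?thesis using False by (simp add: field_simps)
qed

lemma norm_sum_sq: "norm (v::real^'d) = sqrt (\<Sum>i\<in>UNIV. (v$i)^2)"
  by (metis sqnorm norm_ge_zero real_sqrt_unique)

lemma sq_le_of_abs: "\<bar>t::real\<bar> \<le> c \<Longrightarrow> t^2 \<le> c^2"
  by (metis abs_ge_zero power2_abs power_mono)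

theorem proposition3:
  fixes f :: "'k::finite \<Rightarrow> 'd::finite \<Rightarrow> real^'n::finite"
    and x x' :: "real^'n"
  assumes "is_frame f"
  shows "A2 f * dpm x x' \<le> norm (pool2 f x - pool2 f x')
       \<and> norm (pool2 f x - pool2 f x') \<le> B2 f * dpm x x'"
proof -
  define av where "av = (\<lambda>y k. (\<chi> j. f k j \<bullet> y) :: real^'d)"
  define N where "N = norm (pool2 f x - pool2 f x')"
  define D where "D = dpm x x'"
  have pk: "pool2 f y $ k = norm (av y k)" for y k
    by (simp add: pool2_def av_def norm_sum_sq)
  have N2: "N^2 = (\<Sum>k\<in>UNIV. (norm (av x k) - norm (av x' k))^2)"
    unfolding N_def sqnorm by (simp add: pk)
  have avd: "av (x - x') k = av x k - av x' k" for k
    by (simp add: av_def vec_eq_iff inner_diff_right)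
  have ava: "av (x + x') k = av x k + av x' k" for k
    by (simp add: av_def vec_eq_iff inner_add_right)
  have tot: "(\<Sum>k\<in>UNIV. norm (av z k)^2) = (\<Sum>p\<in>UNIV. (z \<bullet> case_prod f p)^2)" for z
    by (simp add: sqnorm av_def inner_commute sum.cartesian_product split_def flip: UNIV_Times_UNIV)
  have N0: "N \<ge> 0" "D \<ge> 0" by (simp_all add: N_def D_def dpm_def)
  have up: "N \<le> B2 f * norm z" if hz: "\<And>k. (norm (av x k) - norm (av x' k))^2 \<le> norm (av z k)^2" for z
  proof -
    have "N^2 \<le> (\<Sum>k\<in>UNIV. norm (av z k)^2)" unfolding N2 by (rule sum_mono) (rule hz)
    also have "\<dots> \<le> (B2 f)^2 * norm z^2" unfolding tot B2_def by (rule lam_plus_bound)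
    also have "\<dots> = (B2 f * norm z)^2" by (simp add: power_mult_distrib)
    finally show ?thesis
      by (rule power2_le_imp_le) (simp add: B2_def lam_plus_nonneg)
  qed
  have up1: "N \<le> B2 f * norm (x - x')"
  proof (rule up)
    fix k show "(norm (av x k) - norm (av x' k))^2 \<le> norm (av (x - x') k)^2"
      unfolding avd by (rule sq_le_of_abs) (rule norm_triangle_ineq3)
  qed
  have up2: "N \<le> B2 f * norm (x + x')"
  proof (rule up)
    fix k
    have "\<bar>norm (av x k) - norm (- av x' k)\<bar> \<le> norm (av x k - - av x' k)"
      by (rule norm_triangle_ineq3)
    then show "(norm (av x k) - norm (av x' k))^2 \<le> norm (av (x + x') k)^2"
      unfolding ava by (intro sq_le_of_abs) simp
  qed
  have upper: "N \<le> B2 f * D"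
    unfolding D_def dpm_def using up1 up2 by (simp add: min_def)
  have "\<forall>k. \<exists>p. orthogonal_matrix (fst p) \<and>
     (\<Sum>i\<in>snd p. ((fst p *v (av x k - av x' k))$i)^2) + (\<Sum>i\<in>-snd p. ((fst p *v (av x k + av x' k))$i)^2)
        \<le> (norm (av x k) - norm (av x' k))^2"
    using pool_step by fastforce
  then obtain P where P: "\<And>k. orthogonal_matrix (fst (P k)) \<and>
     (\<Sum>i\<in>snd (P k). ((fst (P k) *v (av x k - av x' k))$i)^2) + (\<Sum>i\<in>-snd (P k). ((fst (P k) *v (av x k + av x' k))$i)^2)
        \<le> (norm (av x k) - norm (av x' k))^2"
    by metis
  define U where "U = (\<lambda>k. fst (P k))"
  define Om where "Om = (\<lambda>k. snd (P k))"
  define F' where "F' = (\<lambda>k i. \<Sum>j\<in>UNIV. (U k $ i $ j) *\<^sub>R f k j)"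
  have F'Q: "F' \<in> Q2 f" unfolding Q2_def F'_def using P by (auto simp: U_def)
  have key: "z \<bullet> F' k i = (U k *v av z k) $ i" for z k i
    by (simp add: F'_def av_def matrix_vector_mult_def inner_sum_right inner_commute)
  define Ws where "Ws = Sigma UNIV Om"
  have cWs: "- Ws = Sigma UNIV (\<lambda>k. - Om k)" by (auto simp: Ws_def)
  have sig: "(\<Sum>p\<in>Sigma UNIV B. (z \<bullet> case_prod F' p)^2) = (\<Sum>k\<in>UNIV. \<Sum>i\<in>B k. ((U k *v av z k) $ i)^2)" for z B
    by (simp add: sum.Sigma split_def key)
  define l1 where "l1 = lam_minus (case_prod F') Ws"
  define l2 where "l2 = lam_minus (case_prod F') (- Ws)"
  define L where "L = sqrt (l1^2 + l2^2)"
  have "A2 f \<le> (INF \<Omega>\<in>(UNIV :: ('k \<times> 'd) set set).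
     sqrt ((lam_minus (case_prod F') \<Omega>)^2 + (lam_minus (case_prod F') (- \<Omega>))^2))"
    unfolding A2_def
    by (rule cINF_lower[OF _ F'Q], rule bdd_belowI[of _ 0], auto intro!: cINF_greatest)
  also have "\<dots> \<le> L" unfolding L_def l1_def l2_def
    by (rule cINF_lower) (auto intro!: bdd_belowI[of _ 0])
  finally have AL: "A2 f \<le> L" .
  have "(L * D)^2 = l1^2 * D^2 + l2^2 * D^2"
    by (simp add: L_def power_mult_distrib algebra_simps)
  also have "\<dots> \<le> l1^2 * norm (x - x')^2 + l2^2 * norm (x + x')^2"
  proof (rule add_mono; rule mult_left_mono)
    show "D^2 \<le> norm (x - x')^2" using N0 by (intro power_mono) (auto simp: D_def dpm_def)
    show "D^2 \<le> norm (x + x')^2" using N0 by (intro power_mono) (auto simp: D_def dpm_def)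
  qed simp_all
  also have "\<dots> \<le> (\<Sum>p\<in>Ws. ((x - x') \<bullet> case_prod F' p)^2) + (\<Sum>p\<in>-Ws. ((x + x') \<bullet> case_prod F' p)^2)"
    unfolding l1_def l2_def by (intro add_mono lam_minus_bound)
  also have "\<dots> = (\<Sum>k\<in>UNIV. (\<Sum>i\<in>Om k. ((U k *v (av x k - av x' k)) $ i)^2)
       + (\<Sum>i\<in>- Om k. ((U k *v (av x k + av x' k)) $ i)^2))"
    unfolding cWs unfolding Ws_def sig avd ava by (simp add: sum.distrib)
  also have "\<dots> \<le> N^2" unfolding N2
    by (rule sum_mono) (use P in \<open>simp add: U_def Om_def\<close>)
  finally have "(L * D)^2 \<le> N^2" .
  hence "L * D \<le> N" using N0(1) by (rule power2_le_imp_le)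
  moreover have "A2 f * D \<le> L * D" using AL N0(2) by (rule mult_right_mono)
  ultimately have "A2 f * D \<le> N" by linarith
  with upper show ?thesis by (simp add: N_def D_def)
qed
end
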